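(* For each $\mathbf b\in\mathcal B$ let $\xi_{\mathbf b}:S\to\mathbb C[[\lambda]]$ be the $\mathbb C[\lambda]$-linear map with $\xi_{\mathbf b}(x^u)=G^{(\mathbf b)}_u(\lambda)$ for $u\in M$. Then each $\xi_{\mathbf b}$ vanishes on $\sum_{i=1}^n D_iS$ and induces a $\mathcal D$-module homomorphism $\mathcal W\to\mathbb C[[\lambda]]$, and the set $\{\xi_{\mathbf b}\}_{\mathbf b\in\mathcal B}$ is a basis of the $\mathbb C$-vector space $\mathrm{Hom}_{\mathcal D}(\mathcal W,\mathbb C[[\lambda]])$.
   Context: Let $A=\{\mathbf a_1,\dots,\mathbf a_m\}\subseteq\mathbb Z^n$ be linearly independent over $\mathbb R$, $\mathbf a_0\in\mathbb Z^n$, and $\ell_0,\ell_1,\dots,\ell_m$ positive integers with greatest common divisor $1$ such that $\ell_0\mathbf a_0=\sum_{j=1}^m\ell_j\mathbf a_j$ and $\ell_0=\sum_{j=1}^m\ell_j$. Write $\mathbf a_j=(a_{1j},\dots,a_{nj})$ and $x^u=x_1^{u_1}\cdots x_n^{u_n}$. Let $f_\lambda=\sum_{j=1}^m\ell_jx^{\mathbf a_j}-\ell_0\lambda x^{\mathbf a_0}$ with $\lambda$ an indeterminate. Let $V$ be the real span of $A$, $V_{\mathbb Z}=V\cap\mathbb Z^n$, $C(A)$ the closed real cone generated by $A$, $M=V_{\mathbb Z}\cap C(A)$. Let $S$ be the free $\mathbb C[\lambda]$-module with basis $\{x^u:u\in M\}$ (a $\mathbb C[\lambda]$-subalgebra of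 $\mathbb C[\lambda][x_1^{\pm1},\dots,x_n^{\pm1}]$). Let $D_i=x_i\partial/\partial x_i+x_i\partial f_\lambda/\partial x_i$ ($i=1,\dots,n$) and $D_\lambda=\partial/\partial\lambda-\ell_0x^{\mathbf a_0}$, operators on $S$. Let $\mathcal D=\mathbb C[\lambda]\langle\partial_\lambda\rangle$; $S$ and $\mathcal W=S/\sum_{i=1}^nD_iS$ are left $\mathcal D$-modules with $\partial_\lambda$ acting as $D_\lambda$; $\mathbb C[[\lambda]]$ is a left $\mathcal D$-module with $\partial_\lambda=d/d\lambda$. Let $P(A)=\{\sum_j c_j\mathbf a_j:0\le c_j<1\}$ and $\mathcal B=V_{\mathbb Z}\cap P(A)$. For $\mathbf b\in\mathcal B$ write uniquely $\mathbf b=\sum_{j=1}^m v_j\mathbf a_j$ with $v_j\in[0,1)\cap\mathbb Q$. For $z\in\mathbb C$, $l\in\mathbb Z$ set $[z]_0=1$, $[z]_l=1/((z+1)(z+2)\cdots(z+l))$ for $l>0$, and $[z]_l=z(z-1)\cdots(z+l+1)$ for $l<0$. For $u\in M$ put $g^{(\mathbf b)}_u=\prod_{j=1}^m[-v_j]_{s_j}\ell_j^{s_j}$ if $u=\sum_{j=1}^m(v_j-s_j)\mathbf a_j$ with all $s_j\in\mathbb Z_{\le0}$, and $g^{(\mathbf b)}_u=0$ otherwise. Define $G^{(\mathbf b)}_u(\lambda)=\sum_{s\ge0}g^{(\mathbf b)}_{u+s\mathbf a_0}\frac{(-\ell_0\lambda)^s}{s!}\in\mathbb C[[\lambda]]$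 (equivalently $\sum_u G^{(\mathbf b)}_u x^{-u}$ is the part of $\exp(-\ell_0\lambda x^{\mathbf a_0})\sum_u g^{(\mathbf b)}_ux^{-u}$ supported on monomials $x^{-u}$, $u\in M$). *)

theory Defs
  imports "HOL-Analysis.Analysis" "HOL-Computational_Algebra.Polynomial_FPS"
begin

(* Lattice points u \<in> Z^n are modelled as  int ^ 'n  ('n a finite index type, n = CARD('n)).
   The vectors a_0, a_1, ..., a_m are  a 0, a 1, ..., a m,  the integers l_0,...,l_m are l 0, ..., l m. *)

definition rvec :: "int ^ 'n \<Rightarrow> real ^ 'n" where
  "rvec u = (\<chi> i. real_of_int (u $ i))"

definition Vspan :: "(nat \<Rightarrow> int ^ 'n) \<Rightarrow> nat \<Rightarrow> (real ^ 'n) set" where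
  "Vspan a m = span ((\<lambda>j. rvec (a j)) ` {1..m})"

definition coneA :: "(nat \<Rightarrow> int ^ 'n) \<Rightarrow> nat \<Rightarrow> (real ^ 'n) set" where
  "coneA a m = {x. \<exists>c::nat \<Rightarrow> real. (\<forall>j\<in>{1..m}. 0 \<le> c j) \<and>
                    x = (\<Sum>j=1..m. c j *\<^sub>R rvec (a j))}"

definition Mset :: "(nat \<Rightarrow> int ^ 'n) \<Rightarrow> nat \<Rightarrow> (int ^ 'n) set" where
  "Mset a m = {u. rvec u \<in> Vspan a m \<and> rvec u \<in> coneA a m}"

definition parA :: "(nat \<Rightarrow> int ^ 'n) \<Rightarrow> nat \<Rightarrow> (real ^ 'n) set" where
  "parA a m = {x. \<exists>c::nat \<Rightarrow> real. (\<forall>j\<in>{1..m}. 0 \<le> c j \<and> c j < 1) \<and>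
                    x = (\<Sum>j=1..m. c j *\<^sub>R rvec (a j))}"

definition Bset :: "(nat \<Rightarrow> int ^ 'n) \<Rightarrow> nat \<Rightarrow> (int ^ 'n) set" where
  "Bset a m = {b. rvec b \<in> Vspan a m \<and> rvec b \<in> parA a m}"

definition vcoef :: "(nat \<Rightarrow> int ^ 'n) \<Rightarrow> nat \<Rightarrow> int ^ 'n \<Rightarrow> nat \<Rightarrow> real" where
  "vcoef a m b = (THE v. (\<forall>j. j \<notin> {1..m} \<longrightarrow> v j = 0) \<and>
                         (\<forall>j\<in>{1..m}. 0 \<le> v j \<and> v j < 1) \<and>
                         rvec b = (\<Sum>j=1..m. v j *\<^sub>R rvec (a j)))"

definition brk :: "complex \<Rightarrow> int \<Rightarrow> complex" where
  "brk z l = (if l = 0 then 1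
              else if l > 0 then 1 / (\<Prod>k=1..nat l. z + of_nat k)
              else (\<Prod>k=0..<nat (- l). z - of_nat k))"

definition sRep :: "(nat \<Rightarrow> int ^ 'n) \<Rightarrow> nat \<Rightarrow> int ^ 'n \<Rightarrow> int ^ 'n \<Rightarrow> (nat \<Rightarrow> int) \<Rightarrow> bool" where
  "sRep a m b u s \<longleftrightarrow> (\<forall>j. j \<notin> {1..m} \<longrightarrow> s j = 0) \<and> (\<forall>j\<in>{1..m}. s j \<le> 0) \<and>
       rvec u = (\<Sum>j=1..m. (vcoef a m b j - real_of_int (s j)) *\<^sub>R rvec (a j))"

definition gcoef :: "(nat \<Rightarrow> int ^ 'n) \<Rightarrow> (nat \<Rightarrow> nat) \<Rightarrow> nat \<Rightarrow> int ^ 'n \<Rightarrow> int ^ 'n \<Rightarrow> complex" where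
  "gcoef a l m b u =
     (if \<exists>s. sRep a m b u s then
        (let s = (THE s. sRep a m b u s) in
          \<Prod>j=1..m. brk (- complex_of_real (vcoef a m b j)) (s j) * (of_nat (l j)) powi (s j))
      else 0)"

definition Gser :: "(nat \<Rightarrow> int ^ 'n) \<Rightarrow> (nat \<Rightarrow> nat) \<Rightarrow> nat \<Rightarrow> int ^ 'n \<Rightarrow> int ^ 'n \<Rightarrow> complex fps" where
  "Gser a l m b u = Abs_fps (\<lambda>k. gcoef a l m b (u + of_nat k *s a 0)
                                  * (- of_nat (l 0)) ^ k / fact k)"

(* S: finitely supported coefficient functions u \<mapsto> p_u \<in> C[\<lambda>], supported on M;
   p represents \<Sum>_u p_u x^u *)
definition Sset :: "(nat \<Rightarrow> int ^ 'n) \<Rightarrow> nat \<Rightarrow> (int ^ 'n \<Rightarrow> complex poly) set" where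
  "Sset a m = {p. finite {u. p u \<noteq> 0} \<and> {u. p u \<noteq> 0} \<subseteq> Mset a m}"

(* D_i = x_i d/dx_i + x_i (d f_\<lambda>/dx_i), acting on coefficient functions:
   D_i x^u = u_i x^u + \<Sum>_j l_j a_{ij} x^{u+a_j} - l_0 a_{i0} \<lambda> x^{u+a_0} *)
definition Dop :: "(nat \<Rightarrow> int ^ 'n) \<Rightarrow> (nat \<Rightarrow> nat) \<Rightarrow> nat \<Rightarrow> 'n \<Rightarrow>
                   (int ^ 'n \<Rightarrow> complex poly) \<Rightarrow> (int ^ 'n \<Rightarrow> complex poly)" where
  "Dop a l m i p = (\<lambda>w. of_int (w $ i) * p w
       + (\<Sum>j=1..m. of_nat (l j) * of_int (a j $ i) * p (w - a j))
       - of_nat (l 0) * of_int (a 0 $ i) * [:0, 1:] * p (w - a 0))"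

(* D_\<lambda> = d/d\<lambda> - l_0 x^{a_0} *)
definition Dlam :: "(nat \<Rightarrow> int ^ 'n) \<Rightarrow> (nat \<Rightarrow> nat) \<Rightarrow>
                   (int ^ 'n \<Rightarrow> complex poly) \<Rightarrow> (int ^ 'n \<Rightarrow> complex poly)" where
  "Dlam a l p = (\<lambda>w. pderiv (p w) - of_nat (l 0) * p (w - a 0))"

definition DS :: "(nat \<Rightarrow> int ^ 'n) \<Rightarrow> (nat \<Rightarrow> nat) \<Rightarrow> nat \<Rightarrow> (int ^ 'n \<Rightarrow> complex poly) set" where
  "DS a l m = {q. \<exists>ps :: 'n \<Rightarrow> (int ^ 'n \<Rightarrow> complex poly).
                    (\<forall>i. ps i \<in> Sset a m) \<and> q = (\<lambda>w. \<Sum>i\<in>UNIV. Dop a l m i (ps i) w)}"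

(* Hom_D(W, C[[\<lambda>]]), realised as maps S \<rightarrow> C[[\<lambda>]] (extended by 0 outside S) that are
   C[\<lambda>]-linear, vanish on \<Sum>_i D_i S, and intertwine D_\<lambda> with d/d\<lambda> *)
definition HomD :: "(nat \<Rightarrow> int ^ 'n) \<Rightarrow> (nat \<Rightarrow> nat) \<Rightarrow> nat \<Rightarrow>
                    ((int ^ 'n \<Rightarrow> complex poly) \<Rightarrow> complex fps) set" where
  "HomD a l m = {\<phi>.
      (\<forall>p. p \<notin> Sset a m \<longrightarrow> \<phi> p = 0) \<and>
      (\<forall>p\<in>Sset a m. \<forall>q\<in>Sset a m. \<phi> (\<lambda>u. p u + q u) = \<phi> p + \<phi> q) \<and>
      (\<forall>r. \<forall>p\<in>Sset a m. \<phi> (\<lambda>u. r * p u) = fps_of_poly r * \<phi> p) \<and>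
      (\<forall>q\<in>DS a l m. \<phi> q = 0) \<and>
      (\<forall>p\<in>Sset a m. \<phi> (Dlam a l p) = fps_deriv (\<phi> p))}"

definition xi :: "(nat \<Rightarrow> int ^ 'n) \<Rightarrow> (nat \<Rightarrow> nat) \<Rightarrow> nat \<Rightarrow> int ^ 'n \<Rightarrow>
                  (int ^ 'n \<Rightarrow> complex poly) \<Rightarrow> complex fps" where
  "xi a l m b p = (if p \<in> Sset a m
                   then (\<Sum>u\<in>{u. p u \<noteq> 0}. fps_of_poly (p u) * Gser a l m b u)
                   else 0)"

end

theory Submission
  imports Defs
begin


lemma rvec_add[simp]: "rvec (u + v) = rvec u + rvec v"
  by (simp add: rvec_def vec_eq_iff)
lemma rvec_diff[simp]: "rvec (u - v) = rvec u - rvec v"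
  by (simp add: rvec_def vec_eq_iff)
lemma rvec_zero[simp]: "rvec 0 = 0"
  by (simp add: rvec_def vec_eq_iff)
lemma rvec_smult[simp]: "rvec (of_int k *s u) = real_of_int k *\<^sub>R rvec u"
  by (simp add: rvec_def vec_eq_iff)
lemma rvec_smult_nat[simp]: "rvec (of_nat k *s u) = real k *\<^sub>R rvec u"
  by (simp add: rvec_def vec_eq_iff)
lemma rvec_sum: "rvec (sum f A) = (\<Sum>x\<in>A. rvec (f x))"
  by (induction A rule: infinite_finite_induct) auto
lemma rvec_inj: "rvec u = rvec v \<Longrightarrow> u = v"
  by (simp add: rvec_def vec_eq_iff)
lemma rvec_nth: "rvec u $ i = real_of_int (u $ i)"
  by (simp add: rvec_def)

locale CS =
  fixes a :: "nat \<Rightarrow> int ^ 'n" and l :: "nat \<Rightarrow> nat" and m :: nat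
  assumes indep: "independent ((\<lambda>j. rvec (a j)) ` {1..m})"
      and inj: "inj_on a {1..m}"
      and lpos: "\<forall>j\<in>{0..m}. 0 < l j"
      and rel: "of_nat (l 0) *s a 0 = (\<Sum>j=1..m. of_nat (l j) *s a j)"
      and l0: "l 0 = (\<Sum>j=1..m. l j)"
begin

abbreviation "ra j \<equiv> rvec (a j)"

lemma ra_inj: "inj_on ra {1..m}"
  using inj rvec_inj unfolding inj_on_def by metis

lemma uniq0:
  assumes "(\<Sum>j=1..m. c j *\<^sub>R ra j) = 0" "j \<in> {1..m}"
  shows "c j = 0"
proof -
  let ?B = "ra ` {1..m}"
  define c' where "c' v = c (inv_into {1..m} ra v)" for v
  have cr: "c' (ra j) = c j" if "j \<in> {1..m}" for j
    using inv_into_f_f[OF ra_inj that] by (simp add: c'_def)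
  have "(\<Sum>v\<in>?B. c' v *\<^sub>R v) = (\<Sum>j=1..m. c' (ra j) *\<^sub>R ra j)"
    by (rule sum.reindex[OF ra_inj, unfolded comp_def])
  also have "\<dots> = (\<Sum>j=1..m. c j *\<^sub>R ra j)"
    by (intro sum.cong refl) (simp add: cr)
  finally have "(\<Sum>v\<in>?B. c' v *\<^sub>R v) = 0" using assms(1) by simp
  with indep have "\<forall>v\<in>?B. c' v = 0" unfolding independent_explicit by blast
  then show ?thesis using assms(2) cr by force
qed

lemma uniq:
  assumes "(\<Sum>j=1..m. c j *\<^sub>R ra j) = (\<Sum>j=1..m. d j *\<^sub>R ra j)" "j \<in> {1..m}"
  shows "c j = d j"
proof -
  have "(\<Sum>j=1..m. (c j - d j) *\<^sub>R ra j) = 0"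
    using assms(1) by (simp add: scaleR_diff_left sum_subtractf)
  from uniq0[OF this assms(2)] show ?thesis by simp
qed

lemma m_pos: "m \<ge> 1"
  using lpos l0 by (cases m) auto

lemma l_nz: "j \<in> {0..m} \<Longrightarrow> l j \<noteq> 0" using lpos by auto

lemma a0_rep: "ra 0 = (\<Sum>j=1..m. (real (l j) / real (l 0)) *\<^sub>R ra j)"
proof -
  have "rvec (of_nat (l 0) *s a 0) = rvec (\<Sum>j=1..m. of_nat (l j) *s a j)" using rel by simp
  then have "real (l 0) *\<^sub>R ra 0 = (\<Sum>j=1..m. real (l j) *\<^sub>R ra j)"
    by (simp add: rvec_sum)
  moreover have "ra 0 = (1 / real (l 0)) *\<^sub>R (real (l 0) *\<^sub>R ra 0)"
    using l_nz[of 0] by simp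
  ultimately have "ra 0 = (1 / real (l 0)) *\<^sub>R (\<Sum>j=1..m. real (l j) *\<^sub>R ra j)"
    by metis
  then show ?thesis by (simp add: scaleR_sum_right)
qed

abbreviation "MM \<equiv> Mset a m"
abbreviation "BB \<equiv> Bset a m"
abbreviation "SS \<equiv> Sset a m"

lemma comb_span: "(\<Sum>j=1..m. c j *\<^sub>R ra j) \<in> Vspan a m"
  unfolding Vspan_def by (intro span_sum span_scale span_base) auto

lemma M_iff: "u \<in> MM \<longleftrightarrow> (\<exists>c. (\<forall>j\<in>{1..m}. 0 \<le> c j) \<and> rvec u = (\<Sum>j=1..m. c j *\<^sub>R ra j))"
proof
  assume "u \<in> MM" thus "\<exists>c. (\<forall>j\<in>{1..m}. 0 \<le> c j) \<and> rvec u = (\<Sum>j=1..m. c j *\<^sub>R ra j)"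
    unfolding Mset_def coneA_def by blast
next
  assume "\<exists>c. (\<forall>j\<in>{1..m}. 0 \<le> c j) \<and> rvec u = (\<Sum>j=1..m. c j *\<^sub>R ra j)"
  then obtain c where c: "\<forall>j\<in>{1..m}. 0 \<le> c j" "rvec u = (\<Sum>j=1..m. c j *\<^sub>R ra j)" by blast
  then show "u \<in> MM" unfolding Mset_def coneA_def mem_Collect_eq using comb_span[of c] by metis
qed

lemma M_add: assumes "u \<in> MM" "v \<in> MM" shows "u + v \<in> MM"
proof -
  obtain c where c: "\<forall>j\<in>{1..m}. 0 \<le> c j" "rvec u = (\<Sum>j=1..m. c j *\<^sub>R ra j)"
    using assms(1) unfolding M_iff by blast
  obtain d where d: "\<forall>j\<in>{1..m}. 0 \<le> d j" "rvec v = (\<Sum>j=1..m. d j *\<^sub>R ra j)"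
    using assms(2) unfolding M_iff by blast
  note cd = c d
  have h1: "rvec (u+v) = (\<Sum>j=1..m. (c j + d j) *\<^sub>R ra j)"
    using cd by (simp add: scaleR_add_left sum.distrib)
  have h2: "\<forall>j\<in>{1..m}. 0 \<le> c j + d j" using cd by simp
  show ?thesis unfolding M_iff by (intro exI[of _ "\<lambda>j. c j + d j"] conjI h1 h2)
qed

lemma a_M: assumes "j \<in> {1..m}" shows "a j \<in> MM"
  unfolding M_iff
proof (intro exI conjI)
  have "(\<Sum>k=1..m. (if k = j then 1 else 0) *\<^sub>R ra k) = (\<Sum>k=1..m. if k = j then ra k else 0)"
    by (intro sum.cong) auto
  also have "\<dots> = ra j" using assms by (subst sum.delta) auto
  finally show "rvec (a j) = (\<Sum>k=1..m. (if k = j then 1 else (0::real)) *\<^sub>R ra k)" by simp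
qed auto

lemma a0_M: "a 0 \<in> MM"
  unfolding M_iff using a0_rep by (intro exI[of _ "\<lambda>j. real (l j) / real (l 0)"]) auto

lemma zero_M: "0 \<in> MM"
  unfolding M_iff by (intro exI[of _ "\<lambda>j. 0"]) auto

lemma B_iff: "b \<in> BB \<longleftrightarrow> (\<exists>c. (\<forall>j\<in>{1..m}. 0 \<le> c j \<and> c j < 1) \<and> rvec b = (\<Sum>j=1..m. c j *\<^sub>R ra j))"
proof
  assume "b \<in> BB" thus "\<exists>c. (\<forall>j\<in>{1..m}. 0 \<le> c j \<and> c j < 1) \<and> rvec b = (\<Sum>j=1..m. c j *\<^sub>R ra j)"
    unfolding Bset_def parA_def by blast
next
  assume "\<exists>c. (\<forall>j\<in>{1..m}. 0 \<le> c j \<and> c j < 1) \<and> rvec b = (\<Sum>j=1..m. c j *\<^sub>R ra j)"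
  then obtain c where c: "\<forall>j\<in>{1..m}. 0 \<le> c j \<and> c j < 1" "rvec b = (\<Sum>j=1..m. c j *\<^sub>R ra j)" by blast
  then show "b \<in> BB" unfolding Bset_def parA_def mem_Collect_eq using comb_span[of c] by metis
qed

lemma B_M: "b \<in> BB \<Longrightarrow> b \<in> MM"
  unfolding B_iff M_iff by (metis less_imp_le)

lemma vcoef_prop:
  assumes "b \<in> BB"
  shows "(\<forall>j. j \<notin> {1..m} \<longrightarrow> vcoef a m b j = 0) \<and>
         (\<forall>j\<in>{1..m}. 0 \<le> vcoef a m b j \<and> vcoef a m b j < 1) \<and>
         rvec b = (\<Sum>j=1..m. vcoef a m b j *\<^sub>R ra j)"
proof -
  obtain c where c: "\<forall>j\<in>{1..m}. 0 \<le> c j \<and> c j < 1" "rvec b = (\<Sum>j=1..m. c j *\<^sub>R ra j)"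
    using assms B_iff by blast
  define c' where "c' j = (if j \<in> {1..m} then c j else 0)" for j
  have ex: "(\<forall>j. j \<notin> {1..m} \<longrightarrow> c' j = 0) \<and> (\<forall>j\<in>{1..m}. 0 \<le> c' j \<and> c' j < 1) \<and>
         rvec b = (\<Sum>j=1..m. c' j *\<^sub>R ra j)"
    using c by (auto simp: c'_def)
  show ?thesis unfolding vcoef_def
  proof (rule theI[where a = c'])
    show "(\<forall>j. j \<notin> {1..m} \<longrightarrow> c' j = 0) \<and> (\<forall>j\<in>{1..m}. 0 \<le> c' j \<and> c' j < 1) \<and>
         rvec b = (\<Sum>j=1..m. c' j *\<^sub>R ra j)" by (rule ex)
  next
    fix v assume v: "(\<forall>j. j \<notin> {1..m} \<longrightarrow> v j = 0) \<and> (\<forall>j\<in>{1..m}. 0 \<le> v j \<and> v j < 1) \<and>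
         rvec b = (\<Sum>j=1..m. v j *\<^sub>R ra j)"
    show "v = c'"
    proof
      fix j show "v j = c' j"
        using v ex uniq[of v c' j] by (cases "j \<in> {1..m}") auto
    qed
  qed
qed

end


context CS begin

abbreviation "vc b \<equiv> vcoef a m b"

lemma delta_sum: "j \<in> {1..m} \<Longrightarrow> (\<Sum>k=1..m. (if k = j then d else 0) *\<^sub>R ra k) = d *\<^sub>R ra j"
proof -
  assume j: "j \<in> {1..m}"
  have "(\<Sum>k=1..m. (if k = j then d else 0) *\<^sub>R ra k) = (\<Sum>k=1..m. if k = j then d *\<^sub>R ra k else 0)"
    by (intro sum.cong) auto
  also have "\<dots> = d *\<^sub>R ra j" using j by (subst sum.delta) auto
  finally show ?thesis .
qed

lemma shift_sum: "j \<in> {1..m} \<Longrightarrow>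
  (\<Sum>k=1..m. (f k - (if k = j then d else 0)) *\<^sub>R ra k) = (\<Sum>k=1..m. f k *\<^sub>R ra k) - d *\<^sub>R ra j"
proof -
  assume j: "j \<in> {1..m}"
  have "(\<Sum>k=1..m. (f k - (if k = j then d else 0)) *\<^sub>R ra k)
      = (\<Sum>k=1..m. f k *\<^sub>R ra k) - (\<Sum>k=1..m. (if k = j then d else 0) *\<^sub>R ra k)"
    by (simp only: scaleR_diff_left sum_subtractf)
  then show ?thesis by (simp only: delta_sum[OF j])
qed

lemma sRep_unique:
  assumes "b \<in> BB" "sRep a m b u s" "sRep a m b u s'" shows "s = s'"
proof
  fix j show "s j = s' j"
  proof (cases "j \<in> {1..m}")
    case True
    have "(\<Sum>k=1..m. (vc b k - real_of_int (s k)) *\<^sub>R ra k) = (\<Sum>k=1..m. (vc b k - real_of_int (s' k)) *\<^sub>R ra k)"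
      using assms(2,3) unfolding sRep_def by simp
    from uniq[OF this True] show ?thesis by simp
  next
    case False then show ?thesis using assms(2,3) unfolding sRep_def by simp
  qed
qed

definition gprod :: "int ^ 'n \<Rightarrow> (nat \<Rightarrow> int) \<Rightarrow> complex" where
  "gprod b s = (\<Prod>j=1..m. brk (- complex_of_real (vc b j)) (s j) * (of_nat (l j)) powi (s j))"

lemma gcoef_eq: assumes "b \<in> BB" "sRep a m b u s" shows "gcoef a l m b u = gprod b s"
proof -
  have "(THE s. sRep a m b u s) = s" using assms sRep_unique by blast
  then show ?thesis using assms(2) unfolding gcoef_def gprod_def Let_def by auto
qed

lemma gcoef_none: assumes "\<not> (\<exists>s. sRep a m b u s)" shows "gcoef a l m b u = 0"
  unfolding gcoef_def by (rule if_not_P[OF assms])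

lemma brk_nonpos: "s \<le> 0 \<Longrightarrow> brk z s = (\<Prod>k=0..<nat (- s). z - of_nat k)"
  unfolding brk_def by auto

lemma brk_pred: assumes "s \<le> 0" shows "brk z (s - 1) = brk z s * (z + of_int s)"
proof -
  have "nat (- (s - 1)) = Suc (nat (- s))" using assms by simp
  then have "brk z (s - 1) = (\<Prod>k=0..<Suc (nat (- s)). z - of_nat k)"
    using brk_nonpos[of "s - 1" z] assms by simp
  also have "\<dots> = brk z s * (z - of_nat (nat (- s)))"
    using brk_nonpos[OF assms, of z] by simp
  also have "z - of_nat (nat (- s)) = z + of_int s" using assms by simp
  finally show ?thesis .
qed

lemma sRep_step:
  assumes "sRep a m b w s" "j \<in> {1..m}"
  shows "sRep a m b (w + a j) (s(j := s j - 1))"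
proof -
  have "rvec (w + a j) = (\<Sum>k=1..m. (vc b k - real_of_int (s k)) *\<^sub>R ra k) + ra j"
    using assms(1) unfolding sRep_def by simp
  also have "\<dots> = (\<Sum>k=1..m. ((vc b k - real_of_int (s k)) - (if k = j then -1 else 0)) *\<^sub>R ra k)"
    using shift_sum[OF assms(2)] by simp
  also have "\<dots> = (\<Sum>k=1..m. (vc b k - real_of_int ((s(j := s j - 1)) k)) *\<^sub>R ra k)"
    by (intro sum.cong refl) auto
  finally have eq: "rvec (w + a j) = (\<Sum>k=1..m. (vc b k - real_of_int ((s(j := s j - 1)) k)) *\<^sub>R ra k)" .
  have sj: "s j \<le> 0" using assms unfolding sRep_def by blast
  have o: "\<forall>k. k \<notin> {1..m} \<longrightarrow> s k = 0" "\<forall>k\<in>{1..m}. s k \<le> 0" using assms(1) unfolding sRep_def by blast+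
  show ?thesis unfolding sRep_def
  proof (intro conjI eq)
    show "\<forall>k. k \<notin> {1..m} \<longrightarrow> (s(j := s j - 1)) k = 0" using o(1) assms(2) by auto
    show "\<forall>k\<in>{1..m}. (s(j := s j - 1)) k \<le> 0" using o(2) sj by auto
  qed
qed

lemma gprod_step:
  assumes "j \<in> {1..m}" "s j \<le> 0"
  shows "gprod b (s(j := s j - 1)) = gprod b s * ((- complex_of_real (vc b j) + of_int (s j)) / of_nat (l j))"
proof -
  define f where "f s' k = brk (- complex_of_real (vc b k)) (s' k) * (of_nat (l k)) powi (s' k)" for s' k
  have lnz: "(of_nat (l j) :: complex) \<noteq> 0" using l_nz[of j] assms(1) by simp
  have fin: "finite {1..m}" by simp
  have e1: "gprod b (s(j := s j - 1)) = f (s(j := s j - 1)) j * (\<Prod>k\<in>{1..m} - {j}. f (s(j := s j - 1)) k)"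
    unfolding gprod_def f_def[symmetric] using prod.remove[OF fin assms(1)] by blast
  have e2: "(\<Prod>k\<in>{1..m} - {j}. f (s(j := s j - 1)) k) = (\<Prod>k\<in>{1..m} - {j}. f s k)"
    by (intro prod.cong) (auto simp: f_def)
  have e3: "f (s(j := s j - 1)) j = f s j * ((- complex_of_real (vc b j) + of_int (s j)) / of_nat (l j))"
    unfolding f_def using brk_pred[OF assms(2)] power_int_diff[of "of_nat (l j) :: complex" "s j" 1] lnz
    by simp
  have e4: "gprod b s = f s j * (\<Prod>k\<in>{1..m} - {j}. f s k)"
    unfolding gprod_def f_def[symmetric] using prod.remove[OF fin assms(1)] by blast
  show ?thesis unfolding e1 e2 e3 e4 by (simp add: algebra_simps)
qed

lemma none_step:
  assumes "b \<in> BB" "w \<in> MM" "\<not> (\<exists>s. sRep a m b w s)" "j \<in> {1..m}"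
  shows "\<not> (\<exists>s. sRep a m b (w + a j) s)"
proof
  assume "\<exists>s. sRep a m b (w + a j) s"
  then obtain s where s: "sRep a m b (w + a j) s" by blast
  obtain c where c: "\<forall>k\<in>{1..m}. 0 \<le> c k" "rvec w = (\<Sum>k=1..m. c k *\<^sub>R ra k)"
    using assms(2) unfolding M_iff by blast
  have "rvec w = rvec (w + a j) - ra j" by simp
  also have "\<dots> = (\<Sum>k=1..m. (vc b k - real_of_int (s k)) *\<^sub>R ra k) - 1 *\<^sub>R ra j"
    using s unfolding sRep_def by simp
  also have "\<dots> = (\<Sum>k=1..m. ((vc b k - real_of_int (s k)) - (if k = j then 1 else 0)) *\<^sub>R ra k)"
    using shift_sum[OF assms(4)] by simp
  finally have eq: "rvec w = (\<Sum>k=1..m. ((vc b k - real_of_int (s k)) - (if k = j then 1 else 0)) *\<^sub>R ra k)" .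
  have "c j = (vc b j - real_of_int (s j)) - 1"
    using uniq[of c "\<lambda>k. (vc b k - real_of_int (s k)) - (if k = j then 1 else 0)" j] c(2) eq assms(4) by simp
  moreover have "vc b j < 1" using vcoef_prop[OF assms(1)] assms(4) by blast
  ultimately have "real_of_int (s j) < 0" using c(1) assms(4) by force
  then have sj: "s j + 1 \<le> 0" by simp
  have "rvec w = (\<Sum>k=1..m. (vc b k - real_of_int ((s(j := s j + 1)) k)) *\<^sub>R ra k)"
    unfolding eq by (intro sum.cong refl) auto
  then have "sRep a m b w (s(j := s j + 1))"
    using s sj unfolding sRep_def by auto
  then show False using assms(3) by blast
qed

lemma G0:
  assumes "b \<in> BB" "w \<in> MM"
  shows "of_int (w $ i) * gcoef a l m b w
         + (\<Sum>j=1..m. of_nat (l j) * of_int (a j $ i) * gcoef a l m b (w + a j)) = 0"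
proof (cases "\<exists>s. sRep a m b w s")
  case False
  then have "gcoef a l m b w = 0" by (rule gcoef_none)
  moreover have "gcoef a l m b (w + a j) = 0" if "j \<in> {1..m}" for j
    using none_step[OF assms False that] by (rule gcoef_none)
  ultimately show ?thesis by simp
next
  case True
  then obtain s where s: "sRep a m b w s" by blast
  have sle: "s j \<le> 0" if "j \<in> {1..m}" for j using s that unfolding sRep_def by blast
  have "(\<Sum>j=1..m. of_nat (l j) * of_int (a j $ i) * gcoef a l m b (w + a j))
      = (\<Sum>j=1..m. of_nat (l j) * of_int (a j $ i) * (gprod b s * ((- complex_of_real (vc b j) + of_int (s j)) / of_nat (l j))))"
    by (intro sum.cong refl) (simp add: gcoef_eq[OF assms(1) sRep_step[OF s]] gprod_step sle)
  also have "\<dots> = - (gprod b s * (\<Sum>j=1..m. complex_of_real (vc b j - real_of_int (s j)) * of_int (a j $ i)))"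
    unfolding sum_distrib_left sum_negf[symmetric]
  proof (intro sum.cong refl)
    fix j assume j: "j \<in> {1..m}"
    have "(of_nat (l j) :: complex) \<noteq> 0" using l_nz[of j] j by simp
    then show "of_nat (l j) * of_int (a j $ i) * (gprod b s * ((- complex_of_real (vc b j) + of_int (s j)) / of_nat (l j)))
       = - (gprod b s * (complex_of_real (vc b j - real_of_int (s j)) * of_int (a j $ i)))"
      by (simp add: field_simps)
  qed
  also have "(\<Sum>j=1..m. complex_of_real (vc b j - real_of_int (s j)) * of_int (a j $ i)) = of_int (w $ i)"
  proof -
    have "rvec w $ i = (\<Sum>j=1..m. (vc b j - real_of_int (s j)) *\<^sub>R ra j) $ i"
      using s unfolding sRep_def by simp
    then have "real_of_int (w $ i) = (\<Sum>j=1..m. (vc b j - real_of_int (s j)) * real_of_int (a j $ i))"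
      by (simp add: sum_component rvec_nth)
    then have "complex_of_real (real_of_int (w $ i)) = complex_of_real (\<Sum>j=1..m. (vc b j - real_of_int (s j)) * real_of_int (a j $ i))"
      by simp
    then show ?thesis by (simp add: of_real_sum)
  qed
  finally show ?thesis using gcoef_eq[OF assms(1) s] by simp
qed

end


context CS begin

lemma aux: "y \<noteq> 0 \<Longrightarrow> y * (z / (y * f)) = z / (f::complex)"
  by (cases "f = 0") (simp_all add: field_simps)

abbreviation "GG b u \<equiv> Gser a l m b u"
abbreviation "gg b u \<equiv> gcoef a l m b u"

definition Eop :: "(int ^ 'n \<Rightarrow> complex fps) \<Rightarrow> 'n \<Rightarrow> int ^ 'n \<Rightarrow> complex fps" where
  "Eop G i u = fps_const (of_int (u $ i)) * G u
     + (\<Sum>j=1..m. fps_const (of_nat (l j) * of_int (a j $ i)) * G (u + a j))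
     - fps_const (of_nat (l 0) * of_int (a 0 $ i)) * (fps_X * G (u + a 0))"

lemma Eop_nth: "fps_nth (Eop G i u) k = of_int (u $ i) * fps_nth (G u) k
     + (\<Sum>j=1..m. (of_nat (l j) * of_int (a j $ i)) * fps_nth (G (u + a j)) k)
     - (of_nat (l 0) * of_int (a 0 $ i)) * (if k = 0 then 0 else fps_nth (G (u + a 0)) (k - 1))"
  unfolding Eop_def by (simp add: fps_sum_nth fps_mult_left_const_nth fps_X_mult_nth)

lemma Gser_nth: "fps_nth (GG b u) k = gg b (u + of_nat k *s a 0) * (- of_nat (l 0)) ^ k / fact k"
  unfolding Gser_def by simp

lemma M_smult: "u \<in> MM \<Longrightarrow> of_nat k *s u \<in> MM"
proof (induction k)
  case 0 then show ?case using zero_M by simp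
next
  case (Suc k)
  have "of_nat (Suc k) *s u = of_nat k *s u + u" by (simp add: vec_eq_iff algebra_simps)
  then show ?case using M_add Suc by simp
qed

lemma Gser_deriv: "fps_deriv (GG b u) = fps_const (- of_nat (l 0)) * GG b (u + a 0)"
proof (rule fps_ext)
  fix k
  have v: "u + of_nat (Suc k) *s a 0 = u + a 0 + of_nat k *s a 0" by (simp add: vec_eq_iff algebra_simps)
  have "fps_nth (fps_deriv (GG b u)) k = of_nat (Suc k) * (gg b (u + of_nat (Suc k) *s a 0) * (- of_nat (l 0)) ^ Suc k / fact (Suc k))"
    by (simp add: Gser_nth)
  also have "\<dots> = of_nat (Suc k) * ((gg b (u + a 0 + of_nat k *s a 0) * ((- of_nat (l 0)) * (- of_nat (l 0)) ^ k)) / (of_nat (Suc k) * fact k))"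
    unfolding v fact_Suc power_Suc by (simp only: of_nat_mult)
  also have "\<dots> = (gg b (u + a 0 + of_nat k *s a 0) * ((- of_nat (l 0)) * (- of_nat (l 0)) ^ k)) / fact k"
    by (rule aux) (simp only: of_nat_eq_0_iff)
  also have "\<dots> = - of_nat (l 0) * (gg b (u + a 0 + of_nat k *s a 0) * (- of_nat (l 0)) ^ k / fact k)"
    by (simp add: field_simps)
  also have "\<dots> = fps_nth (fps_const (- of_nat (l 0)) * GG b (u + a 0)) k"
    by (simp add: fps_mult_left_const_nth Gser_nth)
  finally show "fps_nth (fps_deriv (GG b u)) k = fps_nth (fps_const (- of_nat (l 0)) * GG b (u + a 0)) k" .
qed

lemma Eop_Gser: assumes b: "b \<in> BB" and u: "u \<in> MM" shows "Eop (GG b) i u = 0"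
proof (rule fps_ext)
  fix k
  define w where "w = u + of_nat k *s a 0"
  define c where "c n = (- of_nat (l 0) :: complex) ^ n / fact n" for n
  have wM: "w \<in> MM" unfolding w_def by (intro M_add u M_smult a0_M)
  have wj: "u + a j + of_nat k *s a 0 = w + a j" for j unfolding w_def by (simp add: vec_eq_iff algebra_simps)
  have wi: "of_int (w $ i) = (of_int (u $ i) + of_nat k * of_int (a 0 $ i) :: complex)" unfolding w_def by simp
  have G0w: "(\<Sum>j=1..m. of_nat (l j) * of_int (a j $ i) * gg b (w + a j)) = - (of_int (w $ i) * gg b w)"
    using G0[OF b wM, of i] by (simp add: eq_neg_iff_add_eq_0 add.commute)
  have "(\<Sum>j=1..m. (of_nat (l j) * of_int (a j $ i)) * fps_nth (GG b (u + a j)) k)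
      = (\<Sum>j=1..m. of_nat (l j) * of_int (a j $ i) * gg b (w + a j)) * c k"
    unfolding sum_distrib_right by (intro sum.cong refl) (simp add: Gser_nth wj c_def)
  also have "\<dots> = - (of_int (w $ i) * gg b w) * c k" by (simp only: G0w)
  finally have S: "(\<Sum>j=1..m. (of_nat (l j) * of_int (a j $ i)) * fps_nth (GG b (u + a j)) k) = - (of_int (w $ i) * gg b w) * c k" .
  have F: "fps_nth (GG b u) k = gg b w * c k" by (simp add: Gser_nth w_def c_def)
  show "fps_nth (Eop (GG b) i u) k = fps_nth 0 k"
  proof (cases k)
    case 0
    then show ?thesis unfolding Eop_nth S F wi by simp
  next
    case (Suc k')
    have v: "u + a 0 + of_nat k' *s a 0 = w" unfolding w_def Suc by (simp add: vec_eq_iff algebra_simps)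
    have L: "fps_nth (GG b (u + a 0)) k' = gg b w * c k'" unfolding Gser_nth v c_def by (simp only: times_divide_eq_right)
    have nz: "(of_nat (Suc k') :: complex) \<noteq> 0" by (simp only: of_nat_eq_0_iff)
    have "of_nat k * c k = of_nat (Suc k') * (((- of_nat (l 0)) * (- of_nat (l 0)) ^ k') / (of_nat (Suc k') * fact k'))"
      unfolding c_def Suc fact_Suc power_Suc by (simp only: of_nat_mult)
    also have "\<dots> = ((- of_nat (l 0)) * (- of_nat (l 0)) ^ k') / fact k'" by (rule aux[OF nz])
    finally have ck: "of_nat k * c k = - of_nat (l 0) * c k'" unfolding c_def by simp
    have "fps_nth (Eop (GG b) i u) k = of_int (u $ i) * (gg b w * c k) - (of_int (w $ i) * gg b w) * c k
          - (of_nat (l 0) * of_int (a 0 $ i)) * (gg b w * c k')"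
      unfolding Eop_nth S F using Suc L by simp
    also have "\<dots> = - (of_nat k * c k) * of_int (a 0 $ i) * gg b w - (of_nat (l 0) * of_int (a 0 $ i)) * (gg b w * c k')"
      unfolding wi by (simp add: algebra_simps)
    also have "\<dots> = 0" unfolding ck by (simp add: algebra_simps)
    finally show ?thesis by simp
  qed
qed

lemma gcoef_B: assumes "b \<in> BB" "b' \<in> BB" shows "gg b b' = (if b = b' then 1 else 0)"
proof (cases "b = b'")
  case True
  have "sRep a m b b (\<lambda>j. 0)" unfolding sRep_def using vcoef_prop[OF assms(1)] by simp
  then have "gg b b = gprod b (\<lambda>j. 0)" using gcoef_eq[OF assms(1)] by blast
  also have "\<dots> = 1" unfolding gprod_def by (simp add: brk_def)
  finally show ?thesis using True by simp
next
  case False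
  have "\<not> (\<exists>s. sRep a m b b' s)"
  proof
    assume "\<exists>s. sRep a m b b' s"
    then obtain s where s: "sRep a m b b' s" by blast
    have vp: "(\<forall>j. j \<notin> {1..m} \<longrightarrow> vc b' j = 0) \<and> (\<forall>j\<in>{1..m}. 0 \<le> vc b' j \<and> vc b' j < 1) \<and>
         rvec b' = (\<Sum>j=1..m. vc b' j *\<^sub>R ra j)" by (rule vcoef_prop[OF assms(2)])
    have vb: "(\<forall>j. j \<notin> {1..m} \<longrightarrow> vc b j = 0) \<and> (\<forall>j\<in>{1..m}. 0 \<le> vc b j \<and> vc b j < 1) \<and>
         rvec b = (\<Sum>j=1..m. vc b j *\<^sub>R ra j)" by (rule vcoef_prop[OF assms(1)])
    have s0: "s j = 0" if j: "j \<in> {1..m}" for j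
    proof -
      have "vc b' j = vc b j - real_of_int (s j)"
        using uniq[of "vc b'" "\<lambda>k. vc b k - real_of_int (s k)" j] vp s j unfolding sRep_def by simp
      moreover have "0 \<le> vc b' j" "vc b' j < 1" "0 \<le> vc b j" "vc b j < 1" using vp vb j by auto
      moreover have "s j \<le> 0" using s j unfolding sRep_def by blast
      ultimately have "real_of_int (s j) > -1" by linarith
      then show "s j = 0" using \<open>s j \<le> 0\<close> by linarith
    qed
    have "rvec b' = (\<Sum>j=1..m. (vc b j - real_of_int (s j)) *\<^sub>R ra j)" using s unfolding sRep_def by blast
    also have "\<dots> = (\<Sum>j=1..m. vc b j *\<^sub>R ra j)" by (intro sum.cong refl) (simp add: s0)
    also have "\<dots> = rvec b" using vb by simp
    finally have "b' = b" by (rule rvec_inj)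
    then show False using False by simp
  qed
  then show ?thesis using False gcoef_none by simp
qed

lemma Gser_B0: assumes "b \<in> BB" "b' \<in> BB" shows "fps_nth (GG b b') 0 = (if b = b' then 1 else 0)"
  using gcoef_B[OF assms] by (simp add: Gser_nth)

lemma finite_B: "finite BB"
proof -
  define K where "K i = (\<Sum>j=1..m. \<bar>a j $ i\<bar>)" for i
  have bound: "\<bar>b $ i\<bar> \<le> K i" if b: "b \<in> BB" for b i
  proof -
    have vp: "(\<forall>j\<in>{1..m}. 0 \<le> vc b j \<and> vc b j < 1) \<and> rvec b = (\<Sum>j=1..m. vc b j *\<^sub>R ra j)"
      using vcoef_prop[OF b] by blast
    then have "rvec b $ i = (\<Sum>j=1..m. vc b j *\<^sub>R ra j) $ i" by simp
    then have "real_of_int (b $ i) = (\<Sum>j=1..m. vc b j * real_of_int (a j $ i))"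
      by (simp add: sum_component rvec_nth)
    then have "\<bar>real_of_int (b $ i)\<bar> \<le> (\<Sum>j=1..m. \<bar>vc b j * real_of_int (a j $ i)\<bar>)"
      by (simp add: sum_abs)
    also have "\<dots> \<le> (\<Sum>j=1..m. real_of_int \<bar>a j $ i\<bar>)"
    proof (intro sum_mono)
      fix j assume "j \<in> {1..m}"
      then have "0 \<le> vc b j \<and> vc b j < 1" using vp by blast
      then have "0 \<le> vc b j" "vc b j \<le> 1" by auto
      then show "\<bar>vc b j * real_of_int (a j $ i)\<bar> \<le> real_of_int \<bar>a j $ i\<bar>"
        by (simp add: abs_mult mult_left_le_one_le)
    qed
    also have "\<dots> = real_of_int (K i)" by (simp add: K_def)
    finally show ?thesis by linarith
  qed
  have "BB \<subseteq> vec_lambda ` (PiE UNIV (\<lambda>i. {- K i..K i}))"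
  proof
    fix b assume b: "b \<in> BB"
    have "(\<lambda>i. b $ i) \<in> PiE UNIV (\<lambda>i. {- K i..K i})"
    proof -
      have "\<forall>i. b $ i \<in> {- K i..K i}" using bound[OF b] by (simp add: abs_le_iff) (smt (verit))
      then show ?thesis unfolding PiE_iff by simp
    qed
    moreover have "b = vec_lambda (\<lambda>i. b $ i)" by simp
    ultimately show "b \<in> vec_lambda ` (PiE UNIV (\<lambda>i. {- K i..K i}))" by blast
  qed
  moreover have "finite (vec_lambda ` (PiE UNIV (\<lambda>i. {- K i..K i})))"
    by (intro finite_imageI finite_PiE) auto
  ultimately show ?thesis by (rule finite_subset)
qed

end



definition supp :: "('a \<Rightarrow> 'b::zero) \<Rightarrow> 'a set" where "supp p = {u. p u \<noteq> 0}"

definition Lin :: "(int ^ 'n \<Rightarrow> complex fps) \<Rightarrow> (int ^ 'n \<Rightarrow> complex poly) \<Rightarrow> complex fps" where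
  "Lin G p = (\<Sum>u\<in>supp p. fps_of_poly (p u) * G u)"

definition delta :: "int ^ 'n \<Rightarrow> int ^ 'n \<Rightarrow> complex poly" where
  "delta u = (\<lambda>w. if w = u then 1 else 0)"

lemma supp_delta[simp]: "supp (delta u) = {u}"
  by (auto simp: supp_def delta_def)

lemma Lin_superset: "finite F \<Longrightarrow> supp p \<subseteq> F \<Longrightarrow> Lin G p = (\<Sum>u\<in>F. fps_of_poly (p u) * G u)"
  unfolding Lin_def by (rule sum.mono_neutral_left) (auto simp: supp_def)

lemma Lin_delta[simp]: "Lin G (delta u) = G u"
  unfolding Lin_def supp_delta by (simp add: delta_def)

lemma Lin_add: assumes "finite (supp p)" "finite (supp q)"
  shows "Lin G (\<lambda>u. p u + q u) = Lin G p + Lin G q"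
proof -
  let ?F = "supp p \<union> supp q"
  have "supp (\<lambda>u. p u + q u) \<subseteq> ?F" by (auto simp: supp_def)
  then have "Lin G (\<lambda>u. p u + q u) = (\<Sum>u\<in>?F. fps_of_poly (p u + q u) * G u)"
    using assms by (intro Lin_superset) auto
  also have "\<dots> = (\<Sum>u\<in>?F. fps_of_poly (p u) * G u) + (\<Sum>u\<in>?F. fps_of_poly (q u) * G u)"
    by (simp add: fps_of_poly_add ring_distribs sum.distrib)
  also have "\<dots> = Lin G p + Lin G q"
    using assms Lin_superset[of ?F p G] Lin_superset[of ?F q G] by simp
  finally show ?thesis .
qed

lemma Lin_scale: assumes "finite (supp p)"
  shows "Lin G (\<lambda>u. r * p u) = fps_of_poly r * Lin G p"
proof -
  have "supp (\<lambda>u. r * p u) \<subseteq> supp p" by (auto simp: supp_def)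
  then have "Lin G (\<lambda>u. r * p u) = (\<Sum>u\<in>supp p. fps_of_poly (r * p u) * G u)"
    using assms by (intro Lin_superset) auto
  also have "\<dots> = fps_of_poly r * Lin G p"
    by (simp add: Lin_def fps_of_poly_mult sum_distrib_left mult.assoc)
  finally show ?thesis .
qed

lemma Lin_zero[simp]: "Lin G (\<lambda>u. 0) = 0"
  by (simp add: Lin_def supp_def)

lemma Lin_sum_fun: assumes "finite I" "\<And>i. i \<in> I \<Longrightarrow> finite (supp (f i))"
  shows "Lin G (\<lambda>w. \<Sum>i\<in>I. f i w) = (\<Sum>i\<in>I. Lin G (f i))"
  using assms
proof (induction I rule: finite_induct)
  case empty then show ?case by simp
next
  case (insert x I)
  have fin: "finite (supp (\<lambda>w. \<Sum>i\<in>I. f i w))"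
  proof (rule finite_subset)
    show "supp (\<lambda>w. \<Sum>i\<in>I. f i w) \<subseteq> (\<Union>i\<in>I. supp (f i))"
      by (auto simp: supp_def intro: ccontr)
    show "finite (\<Union>i\<in>I. supp (f i))" using insert by auto
  qed
  have "Lin G (\<lambda>w. \<Sum>i\<in>insert x I. f i w) = Lin G (\<lambda>w. f x w + (\<Sum>i\<in>I. f i w))"
    using insert by simp
  also have "\<dots> = Lin G (f x) + Lin G (\<lambda>w. \<Sum>i\<in>I. f i w)"
    using insert fin by (intro Lin_add) auto
  finally show ?case using insert by simp
qed

lemma Lin_Gadd: "Lin (\<lambda>u. G1 u + G2 u) p = Lin G1 p + Lin G2 p"
  by (simp add: Lin_def ring_distribs sum.distrib)
lemma Lin_Gdiff: "Lin (\<lambda>u. G1 u - G2 u) p = Lin G1 p - Lin G2 p"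
  by (simp add: Lin_def ring_distribs sum_subtractf)
lemma Lin_Gscale: "Lin (\<lambda>u. c * G u) p = c * Lin G p"
  by (simp add: Lin_def sum_distrib_left algebra_simps)
lemma Lin_Gsum: "Lin (\<lambda>u. \<Sum>j\<in>J. G j u) p = (\<Sum>j\<in>J. Lin (G j) p)"
  unfolding Lin_def by (simp add: sum_distrib_left sum.swap[of _ J])

lemma Lin_shift:
  assumes "finite F" "finite (supp p)" "(\<lambda>u. u + d) ` supp p \<subseteq> F"
  shows "(\<Sum>w\<in>F. fps_of_poly (p (w - d)) * H w) = Lin (\<lambda>u. H (u + d)) p"
proof -
  have "(\<Sum>w\<in>F. fps_of_poly (p (w - d)) * H w) = (\<Sum>w\<in>(\<lambda>u. u + d) ` supp p. fps_of_poly (p (w - d)) * H w)"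
  proof (rule sum.mono_neutral_right[OF assms(1) assms(3)])
    show "\<forall>w\<in>F - (\<lambda>u. u + d) ` supp p. fps_of_poly (p (w - d)) * H w = 0"
    proof
      fix w assume "w \<in> F - (\<lambda>u. u + d) ` supp p"
      then have "w - d \<notin> supp p" by (metis (no_types, lifting) DiffD2 diff_add_cancel image_eqI)
      then show "fps_of_poly (p (w - d)) * H w = 0" by (simp add: supp_def)
    qed
  qed
  also have "\<dots> = (\<Sum>u\<in>supp p. fps_of_poly (p (u + d - d)) * H (u + d))"
    by (subst sum.reindex) (auto simp: inj_on_def)
  also have "\<dots> = Lin (\<lambda>u. H (u + d)) p" by (simp add: Lin_def)
  finally show ?thesis .
qed

lemma fps_of_poly_of_int: "fps_of_poly (of_int k) = fps_const (of_int k)"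
  by (simp add: of_int_poly fps_of_poly_const)
lemma fps_of_poly_of_nat: "fps_of_poly (of_nat k) = fps_const (of_nat k)"
  by (simp only: of_nat_poly fps_of_poly_const)

context CS begin

lemma S_iff: "p \<in> SS \<longleftrightarrow> finite (supp p) \<and> supp p \<subseteq> MM"
  by (simp add: Sset_def supp_def)

lemma Dop_supp:
  fixes p :: "int ^ 'n \<Rightarrow> complex poly"
  defines "F \<equiv> supp p \<union> (\<Union>j\<in>{0..m}. (\<lambda>u. u + a j) ` supp p)"
  shows "supp (Dop a l m i p) \<subseteq> F" "supp (Dlam a l p) \<subseteq> F"
proof -
  have z: "p (w - a j) = 0" if "w \<notin> F" "j \<in> {0..m}" for w j
  proof (rule ccontr)
    assume "p (w - a j) \<noteq> 0"
    then have "w - a j \<in> supp p" by (simp add: supp_def)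
    then have "w \<in> (\<lambda>u. u + a j) ` supp p" by (metis diff_add_cancel image_eqI)
    then show False using that unfolding F_def by blast
  qed
  have z0: "p w = 0" if "w \<notin> F" for w using that unfolding F_def supp_def by blast
  show "supp (Dop a l m i p) \<subseteq> F"
  proof
    fix w assume w: "w \<in> supp (Dop a l m i p)"
    show "w \<in> F"
    proof (rule ccontr)
      assume "w \<notin> F"
      then have "Dop a l m i p w = 0" unfolding Dop_def using z z0 by simp
      then show False using w by (simp add: supp_def)
    qed
  qed
  show "supp (Dlam a l p) \<subseteq> F"
  proof
    fix w assume w: "w \<in> supp (Dlam a l p)"
    show "w \<in> F"
    proof (rule ccontr)
      assume "w \<notin> F"
      then have "Dlam a l p w = 0" unfolding Dlam_def using z z0 by simp
      then show False using w by (simp add: supp_def)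
    qed
  qed
qed

lemma F_props:
  assumes "p \<in> SS"
  shows "finite (supp p \<union> (\<Union>j\<in>{0..m}. (\<lambda>u. u + a j) ` supp p))"
        "supp p \<union> (\<Union>j\<in>{0..m}. (\<lambda>u. u + a j) ` supp p) \<subseteq> MM"
proof -
  show "finite (supp p \<union> (\<Union>j\<in>{0..m}. (\<lambda>u. u + a j) ` supp p))" using assms S_iff by auto
  have aj: "a j \<in> MM" if "j \<in> {0..m}" for j
    using that a_M a0_M by (cases "j = 0") auto
  show "supp p \<union> (\<Union>j\<in>{0..m}. (\<lambda>u. u + a j) ` supp p) \<subseteq> MM"
    using assms S_iff aj M_add by auto
qed

lemma Dop_S: "p \<in> SS \<Longrightarrow> Dop a l m i p \<in> SS"
  using Dop_supp(1)[where p=p and i=i] F_props[of p] unfolding S_iff by (meson finite_subset subset_trans)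
lemma Dlam_S: "p \<in> SS \<Longrightarrow> Dlam a l p \<in> SS"
  using Dop_supp(2)[where p=p] F_props[of p] unfolding S_iff by (meson finite_subset subset_trans)

lemma delta_S: "u \<in> MM \<Longrightarrow> delta u \<in> SS"
  unfolding S_iff by simp

lemma add_S: "p \<in> SS \<Longrightarrow> q \<in> SS \<Longrightarrow> (\<lambda>u. p u + q u) \<in> SS"
proof -
  assume p: "p \<in> SS" and q: "q \<in> SS"
  have "supp (\<lambda>u. p u + q u) \<subseteq> supp p \<union> supp q" by (auto simp: supp_def)
  then show ?thesis using p q unfolding S_iff by (meson finite_UnI finite_subset le_sup_iff subset_trans)
qed

lemma scale_S: "p \<in> SS \<Longrightarrow> (\<lambda>u. r * p u) \<in> SS"
proof -
  assume p: "p \<in> SS"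
  have "supp (\<lambda>u. r * p u) \<subseteq> supp p" by (auto simp: supp_def)
  then show ?thesis using p unfolding S_iff by (meson finite_subset subset_trans)
qed

lemma zero_S: "(\<lambda>u. 0) \<in> SS"
  unfolding S_iff by (simp add: supp_def)

lemma sum_S: "finite I \<Longrightarrow> (\<And>i. i \<in> I \<Longrightarrow> f i \<in> SS) \<Longrightarrow> (\<lambda>w. \<Sum>i\<in>I. f i w) \<in> SS"
proof (induction I rule: finite_induct)
  case empty then show ?case using zero_S by simp
next
  case (insert x I)
  then show ?case using add_S[of "f x" "\<lambda>w. \<Sum>i\<in>I. f i w"] by simp
qed

lemma Dop_Lin:
  assumes p: "p \<in> SS"
  shows "Lin G (Dop a l m i p) = Lin (Eop G i) p"
proof -
  define F where "F = supp p \<union> (\<Union>j\<in>{0..m}. (\<lambda>u. u + a j) ` supp p)"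
  have finF: "finite F" using F_props[OF p] unfolding F_def by blast
  have finp: "finite (supp p)" using p S_iff by blast
  have sh: "(\<lambda>u. u + a j) ` supp p \<subseteq> F" if "j \<in> {0..m}" for j using that unfolding F_def by blast
  have pF: "supp p \<subseteq> F" unfolding F_def by blast
  have Q: "fps_of_poly (Dop a l m i p w) =
      fps_const (of_int (w $ i)) * fps_of_poly (p w)
      + (\<Sum>j=1..m. fps_const (of_nat (l j) * of_int (a j $ i)) * fps_of_poly (p (w - a j)))
      - fps_const (of_nat (l 0) * of_int (a 0 $ i)) * (fps_X * fps_of_poly (p (w - a 0)))" for w
    unfolding Dop_def
    by (simp only: fps_of_poly_add fps_of_poly_diff fps_of_poly_mult fps_of_poly_sum
        fps_of_poly_of_int fps_of_poly_of_nat fps_of_poly_fps_X fps_const_mult[symmetric] mult.assoc)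
  have "Lin G (Dop a l m i p) = (\<Sum>w\<in>F. fps_of_poly (Dop a l m i p w) * G w)"
    using Dop_supp(1)[where p=p and i=i] finF unfolding F_def by (intro Lin_superset) auto
  also have "\<dots> = (\<Sum>w\<in>F. fps_of_poly (p w) * (fps_const (of_int (w $ i)) * G w))
      + (\<Sum>j=1..m. fps_const (of_nat (l j) * of_int (a j $ i)) * (\<Sum>w\<in>F. fps_of_poly (p (w - a j)) * G w))
      - fps_const (of_nat (l 0) * of_int (a 0 $ i)) * fps_X * (\<Sum>w\<in>F. fps_of_poly (p (w - a 0)) * G w)"
    unfolding Q
    by (simp add: ring_distribs sum.distrib sum_subtractf sum_distrib_left sum_distrib_right
          mult.assoc mult.left_commute) (rule sum.swap)
  also have "(\<Sum>w\<in>F. fps_of_poly (p w) * (fps_const (of_int (w $ i)) * G w)) = Lin (\<lambda>u. fps_const (of_int (u $ i)) * G u) p"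
    using Lin_superset[OF finF pF] by simp
  also have "(\<Sum>j=1..m. fps_const (of_nat (l j) * of_int (a j $ i)) * (\<Sum>w\<in>F. fps_of_poly (p (w - a j)) * G w))
      = (\<Sum>j=1..m. fps_const (of_nat (l j) * of_int (a j $ i)) * Lin (\<lambda>u. G (u + a j)) p)"
    by (intro sum.cong refl arg_cong2[where f = "(*)"] Lin_shift finF finp sh) auto
  also have "(\<Sum>w\<in>F. fps_of_poly (p (w - a 0)) * G w) = Lin (\<lambda>u. G (u + a 0)) p"
    by (intro Lin_shift finF finp sh) auto
  also have "Lin (\<lambda>u. fps_const (of_int (u $ i)) * G u) p
      + (\<Sum>j=1..m. fps_const (of_nat (l j) * of_int (a j $ i)) * Lin (\<lambda>u. G (u + a j)) p)
      - fps_const (of_nat (l 0) * of_int (a 0 $ i)) * fps_X * Lin (\<lambda>u. G (u + a 0)) p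
      = Lin (Eop G i) p"
    unfolding Eop_def Lin_Gadd Lin_Gdiff Lin_Gsum Lin_Gscale
    by (simp add: Lin_Gscale[symmetric] mult.assoc)
  finally show ?thesis .
qed

lemma Dlam_Lin:
  assumes p: "p \<in> SS"
  shows "Lin G (Dlam a l p) = (\<Sum>u\<in>supp p. fps_deriv (fps_of_poly (p u)) * G u)
            - fps_const (of_nat (l 0)) * Lin (\<lambda>u. G (u + a 0)) p"
proof -
  define F where "F = supp p \<union> (\<Union>j\<in>{0..m}. (\<lambda>u. u + a j) ` supp p)"
  have finF: "finite F" using F_props[OF p] unfolding F_def by blast
  have finp: "finite (supp p)" using p S_iff by blast
  have sh: "(\<lambda>u. u + a 0) ` supp p \<subseteq> F" unfolding F_def by force
  have pF: "supp p \<subseteq> F" unfolding F_def by blast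
  have "Lin G (Dlam a l p) = (\<Sum>w\<in>F. fps_of_poly (Dlam a l p w) * G w)"
    using Dop_supp(2)[where p=p] finF unfolding F_def by (intro Lin_superset) auto
  also have "\<dots> = (\<Sum>w\<in>F. fps_deriv (fps_of_poly (p w)) * G w)
      - fps_const (of_nat (l 0)) * (\<Sum>w\<in>F. fps_of_poly (p (w - a 0)) * G w)"
    unfolding Dlam_def fps_of_poly_diff fps_of_poly_mult fps_of_poly_pderiv fps_of_poly_of_nat
    by (simp only: ring_distribs sum_subtractf sum_distrib_left mult.assoc)
  also have "(\<Sum>w\<in>F. fps_deriv (fps_of_poly (p w)) * G w) = (\<Sum>u\<in>supp p. fps_deriv (fps_of_poly (p u)) * G u)"
    by (rule sum.mono_neutral_right[OF finF pF]) (auto simp: supp_def)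
  also have "(\<Sum>w\<in>F. fps_of_poly (p (w - a 0)) * G w) = Lin (\<lambda>u. G (u + a 0)) p"
    by (intro Lin_shift finF finp sh)
  finally show ?thesis .
qed

end


context CS begin

abbreviation "XI b \<equiv> xi a l m b"
abbreviation "HH \<equiv> HomD a l m"

lemma fc_neg: "fps_const (- c) = - fps_const (c::complex)"
  by (rule fps_ext) simp

lemma hom_out: "\<phi> \<in> HH \<Longrightarrow> p \<notin> SS \<Longrightarrow> \<phi> p = 0"
  unfolding HomD_def by blast
lemma hom_add: "\<phi> \<in> HH \<Longrightarrow> p \<in> SS \<Longrightarrow> q \<in> SS \<Longrightarrow> \<phi> (\<lambda>u. p u + q u) = \<phi> p + \<phi> q"
proof -
  assume "\<phi> \<in> HH" "p \<in> SS" "q \<in> SS"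
  moreover have "\<phi> \<in> HH \<Longrightarrow> \<forall>p\<in>SS. \<forall>q\<in>SS. \<phi> (\<lambda>u. p u + q u) = \<phi> p + \<phi> q"
    unfolding HomD_def by blast
  ultimately show ?thesis by blast
qed
lemma hom_scale: "\<phi> \<in> HH \<Longrightarrow> p \<in> SS \<Longrightarrow> \<phi> (\<lambda>u. r * p u) = fps_of_poly r * \<phi> p"
proof -
  assume "\<phi> \<in> HH" "p \<in> SS"
  moreover have "\<phi> \<in> HH \<Longrightarrow> \<forall>r. \<forall>p\<in>SS. \<phi> (\<lambda>u. r * p u) = fps_of_poly r * \<phi> p"
    unfolding HomD_def by blast
  ultimately show ?thesis by blast
qed
lemma hom_DS: "\<phi> \<in> HH \<Longrightarrow> q \<in> DS a l m \<Longrightarrow> \<phi> q = 0"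
  unfolding HomD_def by blast
lemma hom_Dlam: "\<phi> \<in> HH \<Longrightarrow> p \<in> SS \<Longrightarrow> \<phi> (Dlam a l p) = fps_deriv (\<phi> p)"
  unfolding HomD_def by blast

lemma xi_Lin: "p \<in> SS \<Longrightarrow> XI b p = Lin (GG b) p"
  unfolding xi_def Lin_def supp_def by simp

lemma Lin_Eop_zero: assumes "b \<in> BB" "supp p \<subseteq> MM" shows "Lin (Eop (GG b) i) p = 0"
  unfolding Lin_def using assms Eop_Gser by (intro sum.neutral) auto

lemma DS_S: assumes "q \<in> DS a l m" shows "q \<in> SS"
proof -
  obtain ps where ps: "\<forall>i. ps i \<in> SS" "q = (\<lambda>w. \<Sum>i\<in>UNIV. Dop a l m i (ps i) w)"
    using assms unfolding DS_def by blast
  show ?thesis unfolding ps(2) by (intro sum_S Dop_S) (use ps(1) in auto)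
qed

lemma xi_DS: assumes b: "b \<in> BB" and q: "q \<in> DS a l m" shows "XI b q = 0"
proof -
  obtain ps where ps: "\<forall>i. ps i \<in> SS" "q = (\<lambda>w. \<Sum>i\<in>UNIV. Dop a l m i (ps i) w)"
    using q unfolding DS_def by blast
  have "XI b q = Lin (GG b) q" using xi_Lin DS_S[OF q] by blast
  also have "\<dots> = (\<Sum>i\<in>UNIV. Lin (GG b) (Dop a l m i (ps i)))"
    unfolding ps(2) by (rule Lin_sum_fun) (use ps(1) Dop_S S_iff in auto)
  also have "\<dots> = (\<Sum>i\<in>UNIV. Lin (Eop (GG b) i) (ps i))"
    using ps(1) Dop_Lin by simp
  also have "\<dots> = 0" using ps(1) Lin_Eop_zero[OF b] S_iff by (intro sum.neutral) auto
  finally show ?thesis .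
qed

lemma xi_Hom: assumes b: "b \<in> BB" shows "XI b \<in> HH"
  unfolding HomD_def mem_Collect_eq
proof (intro conjI ballI allI impI)
  fix p assume "p \<notin> SS" then show "XI b p = 0" unfolding xi_def by simp
next
  fix p q assume p: "p \<in> SS" and q: "q \<in> SS"
  show "XI b (\<lambda>u. p u + q u) = XI b p + XI b q"
    using p q add_S[OF p q] xi_Lin Lin_add S_iff by metis
next
  fix r p assume p: "p \<in> SS"
  show "XI b (\<lambda>u. r * p u) = fps_of_poly r * XI b p"
    using p scale_S[OF p] xi_Lin Lin_scale S_iff by metis
next
  fix q assume "q \<in> DS a l m" then show "XI b q = 0" using xi_DS[OF b] by blast
next
  fix p assume p: "p \<in> SS"
  have "fps_deriv (XI b p) = fps_deriv (\<Sum>u\<in>supp p. fps_of_poly (p u) * GG b u)"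
    by (simp only: xi_Lin[OF p] Lin_def)
  also have "\<dots> = (\<Sum>u\<in>supp p. fps_deriv (fps_of_poly (p u)) * GG b u)
       + (\<Sum>u\<in>supp p. fps_of_poly (p u) * (fps_const (- of_nat (l 0)) * GG b (u + a 0)))"
    by (simp add: fps_deriv_sum Gser_deriv sum.distrib)
  also have "(\<Sum>u\<in>supp p. fps_of_poly (p u) * (fps_const (- of_nat (l 0)) * GG b (u + a 0)))
      = - (fps_const (of_nat (l 0)) * Lin (\<lambda>u. GG b (u + a 0)) p)"
    unfolding Lin_def sum_distrib_left sum_negf[symmetric]
    by (intro sum.cong refl) (simp add: fc_neg mult.left_commute del: fps_const_neg)
  also have "(\<Sum>u\<in>supp p. fps_deriv (fps_of_poly (p u)) * GG b u)
       + - (fps_const (of_nat (l 0)) * Lin (\<lambda>u. GG b (u + a 0)) p) = Lin (GG b) (Dlam a l p)"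
    using Dlam_Lin[OF p] by simp
  also have "\<dots> = XI b (Dlam a l p)" using xi_Lin Dlam_S[OF p] by simp
  finally show "XI b (Dlam a l p) = fps_deriv (XI b p)" by simp
qed

lemma hom_restrict:
  assumes phi: "\<phi> \<in> HH" and F: "finite F" "F \<subseteq> MM"
  shows "\<phi> (\<lambda>w. if w \<in> F then r w else 0) = (\<Sum>u\<in>F. fps_of_poly (r u) * \<phi> (delta u))"
  using F
proof (induction F rule: finite_induct)
  case empty
  have "\<phi> (\<lambda>u. 0 * (0::complex poly)) = fps_of_poly 0 * \<phi> (\<lambda>u. 0)"
    by (rule hom_scale[OF phi zero_S])
  then show ?case by simp
next
  case (insert x F)
  have xM: "x \<in> MM" and FM: "F \<subseteq> MM" using insert by auto
  have S1: "(\<lambda>w. r x * delta x w) \<in> SS" using scale_S delta_S[OF xM] by blast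
  have S2: "(\<lambda>w. if w \<in> F then r w else 0) \<in> SS"
  proof -
    have "supp (\<lambda>w. if w \<in> F then r w else 0) \<subseteq> F" by (auto simp: supp_def split: if_splits)
    then show ?thesis unfolding S_iff using insert FM by (meson finite_subset subset_trans)
  qed
  have eq: "(\<lambda>w. if w \<in> insert x F then r w else 0) = (\<lambda>w. r x * delta x w + (if w \<in> F then r w else 0))"
    using insert(2) by (auto simp: delta_def)
  have "\<phi> (\<lambda>w. if w \<in> insert x F then r w else 0) = \<phi> (\<lambda>w. r x * delta x w) + \<phi> (\<lambda>w. if w \<in> F then r w else 0)"
    unfolding eq by (rule hom_add[OF phi S1 S2])
  also have "\<phi> (\<lambda>w. r x * delta x w) = fps_of_poly (r x) * \<phi> (delta x)"
    by (rule hom_scale[OF phi delta_S[OF xM]])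
  finally show ?case using insert FM by simp
qed

lemma hom_expand: assumes phi: "\<phi> \<in> HH" and p: "p \<in> SS" shows "\<phi> p = Lin (\<lambda>u. \<phi> (delta u)) p"
proof -
  have "p = (\<lambda>w. if w \<in> supp p then p w else 0)" by (auto simp: supp_def)
  then have "\<phi> p = \<phi> (\<lambda>w. if w \<in> supp p then p w else 0)" by simp
  also have "\<dots> = Lin (\<lambda>u. \<phi> (delta u)) p"
    unfolding Lin_def using p S_iff by (intro hom_restrict phi) auto
  finally show ?thesis .
qed

lemma hom_P1: assumes phi: "\<phi> \<in> HH" and u: "u \<in> MM"
  shows "fps_deriv (\<phi> (delta u)) = - (fps_const (of_nat (l 0)) * \<phi> (delta (u + a 0)))"
proof -
  have d: "delta u u = 1" by (simp add: delta_def)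
  have "fps_deriv (\<phi> (delta u)) = \<phi> (Dlam a l (delta u))"
    using hom_Dlam[OF phi delta_S[OF u]] by simp
  also have "\<dots> = Lin (\<lambda>v. \<phi> (delta v)) (Dlam a l (delta u))"
    by (intro hom_expand phi Dlam_S delta_S u)
  also have "\<dots> = - (fps_const (of_nat (l 0)) * \<phi> (delta (u + a 0)))"
    using Dlam_Lin[OF delta_S[OF u], of "\<lambda>v. \<phi> (delta v)"] d by simp
  finally show ?thesis .
qed

lemma hom_P2: assumes phi: "\<phi> \<in> HH" and u: "u \<in> MM"
  shows "Eop (\<lambda>v. \<phi> (delta v)) i u = 0"
proof -
  define ps where "ps i' = (if i' = i then delta u else (\<lambda>_. 0))" for i'
  have psS: "\<forall>i'. ps i' \<in> SS" unfolding ps_def using delta_S[OF u] zero_S by auto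
  define q where "q = (\<lambda>w. \<Sum>i'\<in>UNIV. Dop a l m i' (ps i') w)"
  have "q \<in> DS a l m" unfolding DS_def q_def using psS by blast
  then have "\<phi> q = 0" using hom_DS[OF phi] by blast
  moreover have "q = Dop a l m i (delta u)"
  proof
    fix w
    have "q w = (\<Sum>i'\<in>UNIV. if i' = i then Dop a l m i (delta u) w else 0)"
      unfolding q_def by (intro sum.cong refl) (simp add: ps_def Dop_def)
    also have "\<dots> = Dop a l m i (delta u) w" by simp
    finally show "q w = Dop a l m i (delta u) w" .
  qed
  ultimately have "\<phi> (Dop a l m i (delta u)) = 0" by simp
  moreover have "\<phi> (Dop a l m i (delta u)) = Lin (\<lambda>v. \<phi> (delta v)) (Dop a l m i (delta u))"
    by (intro hom_expand phi Dop_S delta_S u)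
  moreover have "\<dots> = Eop (\<lambda>v. \<phi> (delta v)) i u"
    using Dop_Lin[OF delta_S[OF u]] by simp
  ultimately show ?thesis by simp
qed

end


context CS begin

lemma sumM: "finite J \<Longrightarrow> J \<subseteq> {1..m} \<Longrightarrow> (\<Sum>j\<in>J. of_nat (t j) *s a j) \<in> MM"
proof (induction J rule: finite_induct)
  case empty then show ?case using zero_M by simp
next
  case (insert x J)
  have xm: "x \<in> {1..m}" using insert by blast
  have "of_nat (t x) *s a x \<in> MM" by (rule M_smult[OF a_M[OF xm]])
  moreover have "(\<Sum>j\<in>J. of_nat (t j) *s a j) \<in> MM" using insert by blast
  ultimately show ?case using insert(1,2) by (simp add: M_add)
qed

lemma reach: assumes u: "u \<in> MM" shows "\<exists>b\<in>BB. \<exists>t. u = b + (\<Sum>j=1..m. of_nat (t j) *s a j)"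
proof -
  obtain c where c: "\<forall>j\<in>{1..m}. 0 \<le> c j" "rvec u = (\<Sum>j=1..m. c j *\<^sub>R ra j)"
    using u unfolding M_iff by blast
  define t where "t j = nat \<lfloor>c j\<rfloor>" for j
  define b where "b = u - (\<Sum>j=1..m. of_nat (t j) *s a j)"
  have tj: "real (t j) = real_of_int \<lfloor>c j\<rfloor>" if "j \<in> {1..m}" for j
    using c(1) that unfolding t_def by simp
  have "rvec b = (\<Sum>j=1..m. c j *\<^sub>R ra j) - (\<Sum>j=1..m. real (t j) *\<^sub>R ra j)"
    unfolding b_def using c(2) by (simp add: rvec_sum)
  also have "\<dots> = (\<Sum>j=1..m. (c j - real (t j)) *\<^sub>R ra j)"
    by (simp add: scaleR_diff_left sum_subtractf)
  finally have rb: "rvec b = (\<Sum>j=1..m. (c j - real (t j)) *\<^sub>R ra j)" .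
  have "\<forall>j\<in>{1..m}. 0 \<le> c j - real (t j) \<and> c j - real (t j) < 1"
  proof
    fix j assume j: "j \<in> {1..m}"
    have "real_of_int \<lfloor>c j\<rfloor> \<le> c j \<and> c j < real_of_int \<lfloor>c j\<rfloor> + 1"
      using floor_correct[of "c j"] unfolding of_int_add of_int_1 .
    then show "0 \<le> c j - real (t j) \<and> c j - real (t j) < 1" using tj[OF j] by linarith
  qed
  note cc = this
  have bB: "b \<in> BB" unfolding B_iff by (intro exI[of _ "\<lambda>j. c j - real (t j)"] conjI cc rb)
  have ub: "u = b + (\<Sum>j=1..m. of_nat (t j) *s a j)" unfolding b_def by simp
  show ?thesis by (intro bexI[OF _ bB] exI[of _ t] ub)
qed

lemma const_prop:
  assumes th: "\<theta> \<in> HH" and u: "u \<in> MM" and z: "fps_nth (\<theta> (delta u)) 0 = 0" and j: "j \<in> {1..m}"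
  shows "fps_nth (\<theta> (delta (u + a j))) 0 = 0"
proof -
  define y where "y k = fps_nth (\<theta> (delta (u + a k))) 0" for k
  have E: "(\<Sum>k=1..m. complex_of_real (real (l k) * real_of_int (a k $ i)) * y k) = 0" for i
  proof -
    have "fps_nth (Eop (\<lambda>v. \<theta> (delta v)) i u) 0 = 0" using hom_P2[OF th u] by simp
    then show ?thesis unfolding Eop_nth y_def using z by simp
  qed
  have R: "(\<Sum>k=1..m. (real (l k) * Re (y k)) *\<^sub>R ra k) = 0"
  proof (subst vec_eq_iff, intro allI)
    fix i
    have "Re (\<Sum>k=1..m. complex_of_real (real (l k) * real_of_int (a k $ i)) * y k) = 0" using E by simp
    then have "(\<Sum>k=1..m. real (l k) * real_of_int (a k $ i) * Re (y k)) = 0" by (simp add: Re_sum)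
    then show "(\<Sum>k=1..m. (real (l k) * Re (y k)) *\<^sub>R ra k) $ i = 0 $ i"
      by (simp add: sum_component rvec_nth mult.commute mult.left_commute)
  qed
  have I: "(\<Sum>k=1..m. (real (l k) * Im (y k)) *\<^sub>R ra k) = 0"
  proof (subst vec_eq_iff, intro allI)
    fix i
    have "Im (\<Sum>k=1..m. complex_of_real (real (l k) * real_of_int (a k $ i)) * y k) = 0" using E by simp
    then have "(\<Sum>k=1..m. real (l k) * real_of_int (a k $ i) * Im (y k)) = 0" by (simp add: Im_sum)
    then show "(\<Sum>k=1..m. (real (l k) * Im (y k)) *\<^sub>R ra k) $ i = 0 $ i"
      by (simp add: sum_component rvec_nth mult.commute mult.left_commute)
  qed
  have lj: "real (l j) \<noteq> 0" using l_nz[of j] j by simp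
  have "Re (y j) = 0" using uniq0[OF R j] lj by simp
  moreover have "Im (y j) = 0" using uniq0[OF I j] lj by simp
  ultimately have "y j = 0" by (simp add: complex_eq_iff)
  then show ?thesis unfolding y_def .
qed

lemma vanish:
  assumes th: "\<theta> \<in> HH" and zB: "\<forall>b\<in>BB. fps_nth (\<theta> (delta b)) 0 = 0" and u: "u \<in> MM"
  shows "\<theta> (delta u) = 0"
proof -
  have A: "fps_nth (\<theta> (delta u)) 0 = 0" if u: "u \<in> MM" for u
  proof -
    obtain b t where b: "b \<in> BB" and ut: "u = b + (\<Sum>j=1..m. of_nat (t j) *s a j)"
      using reach[OF u] by blast
    have "J \<subseteq> {1..m} \<Longrightarrow> fps_nth (\<theta> (delta (b + (\<Sum>j\<in>J. of_nat (t j) *s a j)))) 0 = 0" if "finite J" for J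
      using that
    proof (induction J rule: finite_induct)
      case empty then show ?case using zB b by simp
    next
      case (insert j J)
      define v where "v = b + (\<Sum>j\<in>J. of_nat (t j) *s a j)"
      have vM: "v \<in> MM" unfolding v_def using insert B_M[OF b] by (intro M_add sumM) auto
      have jm: "j \<in> {1..m}" using insert by auto
      have "fps_nth (\<theta> (delta (v + of_nat n *s a j))) 0 = 0" for n
      proof (induction n)
        case 0 then show ?case using insert unfolding v_def by simp
      next
        case (Suc n)
        have e: "v + of_nat (Suc n) *s a j = (v + of_nat n *s a j) + a j" by (simp add: vec_eq_iff algebra_simps)
        have "v + of_nat n *s a j \<in> MM" using vM M_smult a_M[OF jm] M_add by blast
        then show ?case unfolding e using const_prop[OF th _ Suc jm] by blast
      qed
      moreover have "b + (\<Sum>j\<in>insert j J. of_nat (t j) *s a j) = v + of_nat (t j) *s a j"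
        unfolding v_def using insert by (simp add: algebra_simps)
      ultimately show ?case by simp
    qed
    then show ?thesis unfolding ut by simp
  qed
  have B: "\<forall>u\<in>MM. fps_nth (\<theta> (delta u)) k = 0" for k
  proof (induction k)
    case 0 then show ?case using A by blast
  next
    case (Suc k)
    show ?case
    proof
      fix u assume u: "u \<in> MM"
      have "u + a 0 \<in> MM" using M_add[OF u a0_M] .
      then have z: "fps_nth (\<theta> (delta (u + a 0))) k = 0" using Suc by blast
      have "fps_nth (fps_deriv (\<theta> (delta u))) k = fps_nth (- (fps_const (of_nat (l 0)) * \<theta> (delta (u + a 0)))) k"
        using hom_P1[OF th u] by simp
      then have "of_nat (k + 1) * fps_nth (\<theta> (delta u)) (k + 1) = 0"
        using z by (simp add: fps_deriv_nth)
      moreover have "(of_nat (k + 1) :: complex) \<noteq> 0" by (simp only: of_nat_eq_0_iff)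
      ultimately show "fps_nth (\<theta> (delta u)) (Suc k) = 0" by (simp only: mult_eq_0_iff) simp
    qed
  qed
  show ?thesis by (rule fps_ext) (use B u in simp)
qed

lemma comb_Hom:
  assumes "finite B" "\<forall>b\<in>B. f b \<in> HH"
  shows "(\<lambda>p. \<Sum>b\<in>B. fps_const (c b) * f b p) \<in> HH"
  unfolding HomD_def mem_Collect_eq
proof (intro conjI ballI allI impI)
  fix p assume p: "p \<notin> SS"
  have "\<forall>b\<in>B. f b p = 0"
  proof
    fix b assume "b \<in> B" then show "f b p = 0" using assms(2) by (intro hom_out[OF _ p]) blast
  qed
  then show "(\<Sum>b\<in>B. fps_const (c b) * f b p) = 0" by simp
next
  fix p q assume p: "p \<in> SS" and q: "q \<in> SS"
  show "(\<Sum>b\<in>B. fps_const (c b) * f b (\<lambda>u. p u + q u)) = (\<Sum>b\<in>B. fps_const (c b) * f b p) + (\<Sum>b\<in>B. fps_const (c b) * f b q)"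
  proof -
    have "(\<Sum>b\<in>B. fps_const (c b) * f b (\<lambda>u. p u + q u)) = (\<Sum>b\<in>B. fps_const (c b) * f b p + fps_const (c b) * f b q)"
      using assms(2) by (intro sum.cong refl) (simp add: hom_add[OF _ p q] ring_distribs)
    then show ?thesis by (simp add: sum.distrib)
  qed
next
  fix r p assume p: "p \<in> SS"
  show "(\<Sum>b\<in>B. fps_const (c b) * f b (\<lambda>u. r * p u)) = fps_of_poly r * (\<Sum>b\<in>B. fps_const (c b) * f b p)"
  proof -
    have "(\<Sum>b\<in>B. fps_const (c b) * f b (\<lambda>u. r * p u)) = (\<Sum>b\<in>B. fps_of_poly r * (fps_const (c b) * f b p))"
      using assms(2) by (intro sum.cong refl) (simp add: hom_scale[OF _ p] mult.left_commute)
    then show ?thesis by (simp add: sum_distrib_left)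
  qed
next
  fix q assume q: "q \<in> DS a l m"
  show "(\<Sum>b\<in>B. fps_const (c b) * f b q) = 0"
    using assms(2) by (intro sum.neutral ballI) (simp add: hom_DS[OF _ q])
next
  fix p assume p: "p \<in> SS"
  show "(\<Sum>b\<in>B. fps_const (c b) * f b (Dlam a l p)) = fps_deriv (\<Sum>b\<in>B. fps_const (c b) * f b p)"
  proof -
    have "(\<Sum>b\<in>B. fps_const (c b) * f b (Dlam a l p)) = (\<Sum>b\<in>B. fps_deriv (fps_const (c b) * f b p))"
      using assms(2) by (intro sum.cong refl) (simp add: hom_Dlam[OF _ p])
    then show ?thesis by (simp add: fps_deriv_sum)
  qed
qed

lemma diff_Hom:
  assumes "\<phi> \<in> HH" "\<psi> \<in> HH"
  shows "(\<lambda>p. \<phi> p - \<psi> p) \<in> HH"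
  unfolding HomD_def mem_Collect_eq
proof (intro conjI ballI allI impI)
  fix p assume p: "p \<notin> SS"
  have "\<phi> p = 0" "\<psi> p = 0" using hom_out[OF assms(1) p] hom_out[OF assms(2) p] by simp_all
  then show "\<phi> p - \<psi> p = 0" by simp
next
  fix p q assume p: "p \<in> SS" and q: "q \<in> SS"
  show "\<phi> (\<lambda>u. p u + q u) - \<psi> (\<lambda>u. p u + q u) = (\<phi> p - \<psi> p) + (\<phi> q - \<psi> q)"
    using hom_add[OF assms(1) p q] hom_add[OF assms(2) p q] by simp
next
  fix r p assume p: "p \<in> SS"
  show "\<phi> (\<lambda>u. r * p u) - \<psi> (\<lambda>u. r * p u) = fps_of_poly r * (\<phi> p - \<psi> p)"
    using hom_scale[OF assms(1) p] hom_scale[OF assms(2) p] by (simp add: right_diff_distrib)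
next
  fix q assume q: "q \<in> DS a l m"
  show "\<phi> q - \<psi> q = 0" using hom_DS[OF assms(1) q] hom_DS[OF assms(2) q] by simp
next
  fix p assume p: "p \<in> SS"
  show "\<phi> (Dlam a l p) - \<psi> (Dlam a l p) = fps_deriv (\<phi> p - \<psi> p)"
    using hom_Dlam[OF assms(1) p] hom_Dlam[OF assms(2) p] by simp
qed

lemma xi_delta: "u \<in> MM \<Longrightarrow> XI b (delta u) = GG b u"
  using xi_Lin[OF delta_S] by simp

lemma comb_at_B:
  assumes b': "b' \<in> BB"
  shows "fps_nth (\<Sum>b\<in>BB. fps_const (c b) * XI b (delta b')) 0 = c b'"
proof -
  have "fps_nth (\<Sum>b\<in>BB. fps_const (c b) * XI b (delta b')) 0 = (\<Sum>b\<in>BB. c b * (if b = b' then 1 else 0))"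
    unfolding fps_sum_nth fps_mult_left_const_nth
    by (intro sum.cong refl) (simp add: xi_delta[OF B_M[OF b']] Gser_B0 b')
  also have "\<dots> = c b'" using finite_B b' by (simp add: if_distrib cong: if_cong)
  finally show ?thesis .
qed

theorem main_loc:
  "finite BB
     \<and> (\<forall>b\<in>BB. (\<forall>q\<in>DS a l m. XI b q = 0) \<and> XI b \<in> HH)
     \<and> (\<forall>c :: int ^ 'n \<Rightarrow> complex.
           (\<forall>p\<in>SS. (\<Sum>b\<in>BB. fps_const (c b) * XI b p) = 0)
           \<longrightarrow> (\<forall>b\<in>BB. c b = 0))
     \<and> (\<forall>\<phi>\<in>HH. \<exists>c :: int ^ 'n \<Rightarrow> complex.
           \<phi> = (\<lambda>p. \<Sum>b\<in>BB. fps_const (c b) * XI b p))"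
proof (intro conjI ballI allI impI)
  show "finite BB" by (rule finite_B)
next
  fix b q assume "b \<in> BB" "q \<in> DS a l m" then show "XI b q = 0" by (rule xi_DS)
next
  fix b assume "b \<in> BB" then show "XI b \<in> HH" by (rule xi_Hom)
next
  fix c :: "int ^ 'n \<Rightarrow> complex" and b'
  assume H: "\<forall>p\<in>SS. (\<Sum>b\<in>BB. fps_const (c b) * XI b p) = 0" and b': "b' \<in> BB"
  have "(\<Sum>b\<in>BB. fps_const (c b) * XI b (delta b')) = 0"
    by (rule H[rule_format, OF delta_S[OF B_M[OF b']]])
  then have "fps_nth (\<Sum>b\<in>BB. fps_const (c b) * XI b (delta b')) 0 = 0" by simp
  then show "c b' = 0" using comb_at_B[OF b'] by simp
next
  fix \<phi> assume phi: "\<phi> \<in> HH"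
  define c where "c b = fps_nth (\<phi> (delta b)) 0" for b
  define \<theta> where "\<theta> = (\<lambda>p. \<phi> p - (\<Sum>b\<in>BB. fps_const (c b) * XI b p))"
  have ch: "(\<lambda>p. \<Sum>b\<in>BB. fps_const (c b) * XI b p) \<in> HH"
    by (rule comb_Hom[OF finite_B]) (use xi_Hom in blast)
  have th: "\<theta> \<in> HH" unfolding \<theta>_def by (rule diff_Hom[OF phi ch])
  have zB: "\<forall>b\<in>BB. fps_nth (\<theta> (delta b)) 0 = 0"
  proof
    fix b assume b: "b \<in> BB"
    have "fps_nth (\<theta> (delta b)) 0 = fps_nth (\<phi> (delta b)) 0 - fps_nth (\<Sum>b'\<in>BB. fps_const (c b') * XI b' (delta b)) 0"
      unfolding \<theta>_def by simp
    also have "\<dots> = c b - c b" unfolding comb_at_B[OF b] c_def ..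
    finally show "fps_nth (\<theta> (delta b)) 0 = 0" by simp
  qed
  have z: "\<theta> p = 0" for p
  proof (cases "p \<in> SS")
    case True
    have "\<theta> p = Lin (\<lambda>u. \<theta> (delta u)) p" by (rule hom_expand[OF th True])
    also have "\<dots> = 0" unfolding Lin_def using True S_iff vanish[OF th zB] by (intro sum.neutral) auto
    finally show ?thesis .
  next
    case False then show ?thesis using hom_out[OF th] by blast
  qed
  show "\<exists>c :: int ^ 'n \<Rightarrow> complex. \<phi> = (\<lambda>p. \<Sum>b\<in>BB. fps_const (c b) * XI b p)"
  proof (intro exI ext)
    fix p show "\<phi> p = (\<Sum>b\<in>BB. fps_const (c b) * XI b p)" using z[of p] unfolding \<theta>_def by simp
  qed
qed

end

theorem corollary3p18:
  fixes a :: "nat \<Rightarrow> int ^ 'n" and l :: "nat \<Rightarrow> nat" and m :: nat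
  assumes indep: "independent ((\<lambda>j. rvec (a j)) ` {1..m})"
      and inj: "inj_on a {1..m}"
      and lpos: "\<forall>j\<in>{0..m}. 0 < l j"
      and lgcd: "Gcd (l ` {0..m}) = 1"
      and rel: "of_nat (l 0) *s a 0 = (\<Sum>j=1..m. of_nat (l j) *s a j)"
      and l0: "l 0 = (\<Sum>j=1..m. l j)"
  shows "finite (Bset a m)
     \<and> (\<forall>b\<in>Bset a m. (\<forall>q\<in>DS a l m. xi a l m b q = 0) \<and> xi a l m b \<in> HomD a l m)
     \<and> (\<forall>c :: int ^ 'n \<Rightarrow> complex.
           (\<forall>p\<in>Sset a m. (\<Sum>b\<in>Bset a m. fps_const (c b) * xi a l m b p) = 0)
           \<longrightarrow> (\<forall>b\<in>Bset a m. c b = 0))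
     \<and> (\<forall>\<phi>\<in>HomD a l m. \<exists>c :: int ^ 'n \<Rightarrow> complex.
           \<phi> = (\<lambda>p. \<Sum>b\<in>Bset a m. fps_const (c b) * xi a l m b p))"
proof -
  interpret CS a l m using indep inj lpos rel l0 by unfold_locales
  show ?thesis by (rule main_loc)
qed


end
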